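(* The sequence $(v_n)_{n\ge0}$ is pointwise nonincreasing, so $v_\infty(\phi):=\lim_{n\to\infty}v_n(\phi)$ exists for every $\phi\ge0$. Each function $v_n$, $0\le n\le\infty$, is concave, nondecreasing, and satisfies $-1/c\le v_n\le0$ on $\mathbb R_+$.
   Context: Fix constants $\lambda,\lambda_0,\lambda_1\in(0,\infty)$, $\mu\in\mathbb R\setminus\{0\}$, $c>0$. Let $(E,\mathcal E)$ be a measurable space with probability measures $\nu_0,\nu_1$, $\nu_1\ll\nu_0$, $f:=d\nu_1/d\nu_0$. On $(\Omega,\mathcal F,\mathbb P_0)$ let $X$ be a standard Wiener process and, independent of it, $(T_n,Z_n)_{n\ge1}$ a marked point process whose arrivals form a Poisson process of rate $\lambda_0$ and whose marks are i.i.d. $\nu_0$, independent of the arrivals. $\mathbb F^X$ is the filtration generated by $X$. Let $L_t=\exp\{\mu X_t-(\mu^2/2+\lambda_1-\lambda_0)t\}\prod_{n:\,T_n\le t}\frac{\lambda_1}{\lambda_0}f(Z_n)$; for $\phi\ge0$, $\Phi_t=\phi e^{\lambda t}L_t+\int_0^t\lambda e^{\lambda(t-s)}\frac{L_t}{L_s}ds$, with $\mathbb E_0^\phi$ the expectation when $\Phi_0=\phi$. Let $g(\phi)=\phi-\lambda/c$. For bounded Borel $w$, $(Jw)(\phi)=\inf_{\tau}\mathbb E_0^\phi\big[\int_0^{\tau\wedge T_1}e^{-\lambda t}g(\Phi_t)dt+\mathbf 1_{\{\tau\ge T_1\}}e^{-\lambda T_1}w(\Phi_{T_1})\big]$, infimum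 over $\mathbb F^X$-stopping times $\tau$. Define $v_0\equiv0$ and $v_{n+1}=Jv_n$ for $n\ge0$. *)

theory Defs
  imports "HOL-Probability.Probability"
begin

definition wiener_process :: "'a measure \<Rightarrow> (real \<Rightarrow> 'a \<Rightarrow> real) \<Rightarrow> bool" where
  "wiener_process M X \<longleftrightarrow>
     (\<forall>t. X t \<in> borel_measurable M) \<and>
     (AE \<omega> in M. X 0 \<omega> = 0) \<and>
     (AE \<omega> in M. continuous_on {0..} (\<lambda>t. X t \<omega>)) \<and>
     (\<forall>s t. 0 \<le> s \<and> s < t \<longrightarrow>
        distributed M lborel (\<lambda>\<omega>. X t \<omega> - X s \<omega>) (normal_density 0 (sqrt (t - s)))) \<and>
     (\<forall>ts :: nat \<Rightarrow> real. \<forall>k. 0 \<le> ts 0 \<and> strict_mono ts \<longrightarrow>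
        prob_space.indep_vars M (\<lambda>_. borel) (\<lambda>i \<omega>. X (ts (Suc i)) \<omega> - X (ts i) \<omega>) {..<k})"

text \<open>Arrival times T 1 < T 2 < ... (index 0 unused) of a Poisson process of rate l:
  the interarrival times T 1, T 2 - T 1, T 3 - T 2, ... are i.i.d. exponential(l).\<close>
definition interarrival :: "(nat \<Rightarrow> 'a \<Rightarrow> real) \<Rightarrow> nat \<Rightarrow> 'a \<Rightarrow> real" where
  "interarrival T n \<omega> = T (Suc n) \<omega> - (if n = 0 then 0 else T n \<omega>)"

definition poisson_arrivals :: "'a measure \<Rightarrow> real \<Rightarrow> (nat \<Rightarrow> 'a \<Rightarrow> real) \<Rightarrow> bool" where
  "poisson_arrivals M l T \<longleftrightarrow>
     (\<forall>n. T (Suc n) \<in> borel_measurable M) \<and>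
     prob_space.indep_vars M (\<lambda>_. borel) (interarrival T) UNIV \<and>
     (\<forall>n. distributed M lborel (interarrival T n) (exponential_density l))"

text \<open>Marks Z 1, Z 2, ... (index 0 unused): i.i.d. with law nu.\<close>
definition iid_marks :: "'a measure \<Rightarrow> 'e measure \<Rightarrow> (nat \<Rightarrow> 'a \<Rightarrow> 'e) \<Rightarrow> bool" where
  "iid_marks M nu Z \<longleftrightarrow>
     (\<forall>n. Z (Suc n) \<in> measurable M nu) \<and>
     prob_space.indep_vars M (\<lambda>_. nu) (\<lambda>n. Z (Suc n)) UNIV \<and>
     (\<forall>n. distr M nu (Z (Suc n)) = nu)"

definition indep_rv_pair :: "'a measure \<Rightarrow> 'b measure \<Rightarrow> ('a \<Rightarrow> 'b) \<Rightarrow> 'c measure \<Rightarrow> ('a \<Rightarrow> 'c) \<Rightarrow> bool" where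
  "indep_rv_pair M Ma A Mb B \<longleftrightarrow>
     A \<in> measurable M Ma \<and> B \<in> measurable M Mb \<and>
     prob_space.indep_set M {A -` S \<inter> space M | S. S \<in> sets Ma} {B -` S \<inter> space M | S. S \<in> sets Mb}"

text \<open>Natural filtration of X, indexed by [0, \<infinity>] (so that stopping times may be infinite):
  F t = sigma(X s : 0 <= s <= t).\<close>
definition natfilt :: "'a measure \<Rightarrow> (real \<Rightarrow> 'a \<Rightarrow> real) \<Rightarrow> ennreal \<Rightarrow> 'a measure" where
  "natfilt M X t = sigma (space M)
     (\<Union>s\<in>{s. 0 \<le> s \<and> ennreal s \<le> t}. {X s -` B \<inter> space M | B. B \<in> sets borel})"

definition eexp :: "'a measure \<Rightarrow> ('a \<Rightarrow> real) \<Rightarrow> ereal" where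
  "eexp M Y = enn2ereal (\<integral>\<^sup>+\<omega>. ennreal (Y \<omega>) \<partial>M) - enn2ereal (\<integral>\<^sup>+\<omega>. ennreal (- Y \<omega>) \<partial>M)"

definition Lproc :: "real \<Rightarrow> real \<Rightarrow> real \<Rightarrow> ('e \<Rightarrow> real) \<Rightarrow> (real \<Rightarrow> 'a \<Rightarrow> real)
    \<Rightarrow> (nat \<Rightarrow> 'a \<Rightarrow> real) \<Rightarrow> (nat \<Rightarrow> 'a \<Rightarrow> 'e) \<Rightarrow> real \<Rightarrow> 'a \<Rightarrow> real" where
  "Lproc mu lam0 lam1 f X T Z t \<omega> =
     exp (mu * X t \<omega> - (mu\<^sup>2 / 2 + lam1 - lam0) * t) *
     (\<Prod>n\<in>{n. 1 \<le> n \<and> T n \<omega> \<le> t}. lam1 / lam0 * f (Z n \<omega>))"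

text \<open>The ratio L t / L s (0 <= s <= t), written out explicitly.\<close>
definition Lratio :: "real \<Rightarrow> real \<Rightarrow> real \<Rightarrow> ('e \<Rightarrow> real) \<Rightarrow> (real \<Rightarrow> 'a \<Rightarrow> real)
    \<Rightarrow> (nat \<Rightarrow> 'a \<Rightarrow> real) \<Rightarrow> (nat \<Rightarrow> 'a \<Rightarrow> 'e) \<Rightarrow> real \<Rightarrow> real \<Rightarrow> 'a \<Rightarrow> real" where
  "Lratio mu lam0 lam1 f X T Z s t \<omega> =
     exp (mu * (X t \<omega> - X s \<omega>) - (mu\<^sup>2 / 2 + lam1 - lam0) * (t - s)) *
     (\<Prod>n\<in>{n. 1 \<le> n \<and> s < T n \<omega> \<and> T n \<omega> \<le> t}. lam1 / lam0 * f (Z n \<omega>))"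

definition Phi :: "real \<Rightarrow> real \<Rightarrow> real \<Rightarrow> real \<Rightarrow> ('e \<Rightarrow> real) \<Rightarrow> (real \<Rightarrow> 'a \<Rightarrow> real)
    \<Rightarrow> (nat \<Rightarrow> 'a \<Rightarrow> real) \<Rightarrow> (nat \<Rightarrow> 'a \<Rightarrow> 'e) \<Rightarrow> real \<Rightarrow> real \<Rightarrow> 'a \<Rightarrow> real" where
  "Phi lam mu lam0 lam1 f X T Z phi t \<omega> =
     phi * exp (lam * t) * Lproc mu lam0 lam1 f X T Z t \<omega> +
     (LINT s:{0..t}|lborel. lam * exp (lam * (t - s)) * Lratio mu lam0 lam1 f X T Z s t \<omega>)"

definition payoff :: "real \<Rightarrow> real \<Rightarrow> real \<Rightarrow> real \<Rightarrow> real \<Rightarrow> ('e \<Rightarrow> real) \<Rightarrow> (real \<Rightarrow> 'a \<Rightarrow> real)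
    \<Rightarrow> (nat \<Rightarrow> 'a \<Rightarrow> real) \<Rightarrow> (nat \<Rightarrow> 'a \<Rightarrow> 'e) \<Rightarrow> ('a \<Rightarrow> ennreal) \<Rightarrow> (real \<Rightarrow> real)
    \<Rightarrow> real \<Rightarrow> 'a \<Rightarrow> real" where
  "payoff lam mu c lam0 lam1 f X T Z \<tau> w phi \<omega> =
     (LINT t:{t. 0 \<le> t \<and> ennreal t < min (\<tau> \<omega>) (ennreal (T 1 \<omega>))}|lborel.
        exp (- lam * t) * (Phi lam mu lam0 lam1 f X T Z phi t \<omega> - lam / c)) +
     (if ennreal (T 1 \<omega>) \<le> \<tau> \<omega>
      then exp (- lam * T 1 \<omega>) * w (Phi lam mu lam0 lam1 f X T Z phi (T 1 \<omega>) \<omega>)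
      else 0)"

definition Jop :: "'a measure \<Rightarrow> real \<Rightarrow> real \<Rightarrow> real \<Rightarrow> real \<Rightarrow> real \<Rightarrow> ('e \<Rightarrow> real)
    \<Rightarrow> (real \<Rightarrow> 'a \<Rightarrow> real) \<Rightarrow> (nat \<Rightarrow> 'a \<Rightarrow> real) \<Rightarrow> (nat \<Rightarrow> 'a \<Rightarrow> 'e)
    \<Rightarrow> (real \<Rightarrow> real) \<Rightarrow> real \<Rightarrow> ereal" where
  "Jop M lam mu c lam0 lam1 f X T Z w phi =
     (INF \<tau> \<in> {\<tau>. stopping_time (natfilt M X) \<tau>}.
        eexp M (payoff lam mu c lam0 lam1 f X T Z \<tau> w phi))"

primrec vseq :: "'a measure \<Rightarrow> real \<Rightarrow> real \<Rightarrow> real \<Rightarrow> real \<Rightarrow> real \<Rightarrow> ('e \<Rightarrow> real)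
    \<Rightarrow> (real \<Rightarrow> 'a \<Rightarrow> real) \<Rightarrow> (nat \<Rightarrow> 'a \<Rightarrow> real) \<Rightarrow> (nat \<Rightarrow> 'a \<Rightarrow> 'e)
    \<Rightarrow> nat \<Rightarrow> real \<Rightarrow> ereal" where
  "vseq M lam mu c lam0 lam1 f X T Z 0 = (\<lambda>_. 0)"
| "vseq M lam mu c lam0 lam1 f X T Z (Suc n) =
     Jop M lam mu c lam0 lam1 f X T Z (\<lambda>phi. real_of_ereal (vseq M lam mu c lam0 lam1 f X T Z n phi))"

end

theory Submission
  imports Defs
begin
lemma eexp_mono_AE:
  assumes "AE x in M. Y x \<le> Y' x"
  shows "eexp M Y \<le> eexp M Y'"
proof -
  have 1: "(\<integral>\<^sup>+x. ennreal (Y x) \<partial>M) \<le> (\<integral>\<^sup>+x. ennreal (Y' x) \<partial>M)"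
    by (rule nn_integral_mono_AE) (use assms in \<open>auto intro: ennreal_leI elim!: eventually_mono\<close>)
  have 2: "(\<integral>\<^sup>+x. ennreal (- Y' x) \<partial>M) \<le> (\<integral>\<^sup>+x. ennreal (- Y x) \<partial>M)"
    by (rule nn_integral_mono_AE) (use assms in \<open>auto intro: ennreal_leI elim!: eventually_mono\<close>)
  show ?thesis unfolding eexp_def
    by (rule ereal_minus_mono) (use 1 2 in \<open>auto simp: less_eq_ennreal.rep_eq\<close>)
qed

lemma eexp_zero_AE:
  assumes "AE x in M. Y x = 0"
  shows "eexp M Y = 0"
proof -
  have "(\<integral>\<^sup>+x. ennreal (Y x) \<partial>M) = 0"
    by (subst nn_integral_cong_AE[where v="\<lambda>_. 0"]) (use assms in \<open>auto elim!: eventually_mono\<close>)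
  moreover have "(\<integral>\<^sup>+x. ennreal (- Y x) \<partial>M) = 0"
    by (subst nn_integral_cong_AE[where v="\<lambda>_. 0"]) (use assms in \<open>auto elim!: eventually_mono\<close>)
  ultimately show ?thesis unfolding eexp_def by simp
qed

lemma eexp_ge:
  assumes M: "prob_space M" and a: "0 \<le> a" and ae: "AE x in M. - a \<le> Y x"
  shows "- ereal a \<le> eexp M Y"
proof -
  have "(\<integral>\<^sup>+x. ennreal (- Y x) \<partial>M) \<le> (\<integral>\<^sup>+x. ennreal a \<partial>M)"
    by (rule nn_integral_mono_AE) (use ae in \<open>auto intro: ennreal_leI elim!: eventually_mono\<close>)
  also have "\<dots> = ennreal a" using M by (simp add: prob_space.emeasure_space_1)
  finally have "enn2ereal (\<integral>\<^sup>+x. ennreal (- Y x) \<partial>M) \<le> ereal a"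
    by (metis a enn2ereal_ennreal less_eq_ennreal.rep_eq)
  moreover have "0 \<le> enn2ereal (\<integral>\<^sup>+x. ennreal (Y x) \<partial>M)" by simp
  ultimately show ?thesis unfolding eexp_def
    by (metis ereal_minus_mono ereal_minus(8) zero_ereal_def)
qed

lemma eexp_shift:
  assumes M: "prob_space M" and a: "0 \<le> a"
    and Ym: "Y' \<in> borel_measurable M" and eq: "AE x in M. Y x = Y' x"
    and ae: "AE x in M. - a \<le> Y x"
  shows "eexp M Y = enn2ereal (\<integral>\<^sup>+x. ennreal (Y' x + a) \<partial>M) - ereal a"
proof -
  define p where "p = (\<integral>\<^sup>+x. ennreal (Y' x) \<partial>M)"
  define q where "q = (\<integral>\<^sup>+x. ennreal (- Y' x) \<partial>M)"
  define r where "r = (\<integral>\<^sup>+x. ennreal (a - max (- Y' x) 0) \<partial>M)"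
  have e1: "eexp M Y = enn2ereal p - enn2ereal q"
    unfolding eexp_def p_def q_def
    by (intro arg_cong2[where f="(-)"] arg_cong[where f=enn2ereal] nn_integral_cong_AE)
       (use eq in \<open>auto elim!: eventually_mono\<close>)
  have ae': "AE x in M. - a \<le> Y' x" using ae eq by eventually_elim auto
  have "(\<integral>\<^sup>+x. ennreal (Y' x + a) \<partial>M) = (\<integral>\<^sup>+x. ennreal (Y' x) + ennreal (a - max (- Y' x) 0) \<partial>M)"
  proof (rule nn_integral_cong_AE, use ae' in \<open>eventually_elim\<close>)
    case (elim x)
    show ?case
    proof (cases "0 \<le> Y' x")
      case True then show ?thesis using a by (simp add: ennreal_plus[symmetric] del: ennreal_plus)
    next
      case False then show ?thesis using elim by (simp add: ennreal_neg max_def)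
    qed
  qed
  also have "\<dots> = p + r" unfolding p_def r_def
    by (rule nn_integral_add) (use Ym in auto)
  finally have e2: "(\<integral>\<^sup>+x. ennreal (Y' x + a) \<partial>M) = p + r" .
  have "r + q = (\<integral>\<^sup>+x. ennreal (a - max (- Y' x) 0) + ennreal (- Y' x) \<partial>M)"
    unfolding r_def q_def by (rule nn_integral_add[symmetric]) (use Ym in auto)
  also have "\<dots> = (\<integral>\<^sup>+x. ennreal a \<partial>M)"
    by (rule nn_integral_cong_AE) (use ae' in \<open>auto elim!: eventually_mono simp: ennreal_plus[symmetric] max_def ennreal_neg\<close>)
  also have "\<dots> = ennreal a" using M by (simp add: prob_space.emeasure_space_1)
  finally have rq: "r + q = ennreal a" .
  have "q \<le> r + q" by simp
  then have "q \<le> ennreal a" using rq by simp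
  then have "q < \<top>" using ennreal_less_top[of a] by (rule le_less_trans)
  have "r \<le> r + q" by simp
  then have "r \<le> ennreal a" using rq by simp
  then have "r < \<top>" using ennreal_less_top[of a] by (rule le_less_trans)
  with \<open>q < \<top>\<close> obtain qr rr where qr: "q = ennreal qr" "0 \<le> qr" and rr: "r = ennreal rr" "0 \<le> rr"
    by (metis ennreal_cases less_irrefl)
  have "rr + qr = a" using rq qr rr a by (simp add: ennreal_plus[symmetric] del: ennreal_plus)
  have h1: "enn2ereal (p + r) = enn2ereal p + ereal rr" using rr by (simp add: plus_ennreal.rep_eq)
  have h2: "enn2ereal q = ereal qr" using qr by simp
  have "enn2ereal p - ereal qr = enn2ereal p + ereal rr - ereal (rr + qr)"
    by (cases "enn2ereal p") simp_all
  then show ?thesis unfolding e1 e2 h1 h2 using \<open>rr + qr = a\<close> by simp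
qed

lemma nn_concave_aux:
  assumes Yxm: "Yx \<in> borel_measurable M" and Yym: "Yy \<in> borel_measurable M"
    and u: "0 \<le> u" and v: "0 \<le> v" and uv: "u + v = 1" and a: "0 \<le> a"
    and ax: "AE x in M. - a \<le> Yx x" and ay: "AE x in M. - a \<le> Yy x"
    and cz: "AE x in M. u * Yx x + v * Yy x \<le> Yz x"
  shows "ennreal u * (\<integral>\<^sup>+x. ennreal (Yx x + a) \<partial>M) + ennreal v * (\<integral>\<^sup>+x. ennreal (Yy x + a) \<partial>M)
     \<le> (\<integral>\<^sup>+x. ennreal (Yz x + a) \<partial>M)"
proof -
  have "ennreal u * (\<integral>\<^sup>+x. ennreal (Yx x + a) \<partial>M) + ennreal v * (\<integral>\<^sup>+x. ennreal (Yy x + a) \<partial>M)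
     = (\<integral>\<^sup>+x. ennreal u * ennreal (Yx x + a) \<partial>M) + (\<integral>\<^sup>+x. ennreal v * ennreal (Yy x + a) \<partial>M)"
    using Yxm Yym by (simp add: nn_integral_cmult)
  also have "\<dots> = (\<integral>\<^sup>+x. ennreal u * ennreal (Yx x + a) + ennreal v * ennreal (Yy x + a) \<partial>M)"
    using Yxm Yym by (intro nn_integral_add[symmetric]) auto
  also have "\<dots> \<le> (\<integral>\<^sup>+x. ennreal (Yz x + a) \<partial>M)"
  proof (rule nn_integral_mono_AE, use ax ay cz in eventually_elim)
    case (elim x)
    have "ennreal u * ennreal (Yx x + a) + ennreal v * ennreal (Yy x + a)
        = ennreal (u * (Yx x + a) + v * (Yy x + a))"
      using elim u v by (simp add: ennreal_mult[symmetric] ennreal_plus[symmetric] del: ennreal_plus)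
    also have "\<dots> \<le> ennreal (Yz x + a)"
    proof (intro ennreal_leI)
      have "u * (Yx x + a) + v * (Yy x + a) = u * Yx x + v * Yy x + (u + v) * a" by (simp add: algebra_simps)
      then show "u * (Yx x + a) + v * (Yy x + a) \<le> Yz x + a" using elim uv by simp
    qed
    finally show ?case .
  qed
  finally show ?thesis .
qed

lemma eexp_concave:
  assumes M: "prob_space M" and a: "0 \<le> a"
    and Yxm: "Yx' \<in> borel_measurable M" and Yym: "Yy' \<in> borel_measurable M" and Yzm: "Yz' \<in> borel_measurable M"
    and ex: "AE x in M. Yx x = Yx' x" and ey: "AE x in M. Yy x = Yy' x" and ez: "AE x in M. Yz x = Yz' x"
    and ax: "AE x in M. - a \<le> Yx x" and ay: "AE x in M. - a \<le> Yy x" and az: "AE x in M. - a \<le> Yz x"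
    and u: "0 \<le> u" and v: "0 \<le> v" and uv: "u + v = 1"
    and cz: "AE x in M. u * Yx' x + v * Yy' x \<le> Yz' x"
  shows "ereal u * eexp M Yx + ereal v * eexp M Yy \<le> eexp M Yz"
proof -
  define Hx where "Hx = (\<integral>\<^sup>+x. ennreal (Yx' x + a) \<partial>M)"
  define Hy where "Hy = (\<integral>\<^sup>+x. ennreal (Yy' x + a) \<partial>M)"
  define Hz where "Hz = (\<integral>\<^sup>+x. ennreal (Yz' x + a) \<partial>M)"
  have Ex: "eexp M Yx = enn2ereal Hx - ereal a" unfolding Hx_def by (rule eexp_shift[OF M a Yxm ex ax])
  have Ey: "eexp M Yy = enn2ereal Hy - ereal a" unfolding Hy_def by (rule eexp_shift[OF M a Yym ey ay])
  have Ez: "eexp M Yz = enn2ereal Hz - ereal a" unfolding Hz_def by (rule eexp_shift[OF M a Yzm ez az])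
  have ax': "AE x in M. - a \<le> Yx' x" using ax ex by eventually_elim auto
  have ay': "AE x in M. - a \<le> Yy' x" using ay ey by eventually_elim auto
  have H: "ennreal u * Hx + ennreal v * Hy \<le> Hz"
    unfolding Hx_def Hy_def Hz_def by (rule nn_concave_aux[OF Yxm Yym u v uv a ax' ay' cz])
  then have H': "ereal u * enn2ereal Hx + ereal v * enn2ereal Hy \<le> enn2ereal Hz"
    using u v by (simp add: less_eq_ennreal.rep_eq plus_ennreal.rep_eq times_ennreal.rep_eq)
  have "ereal u * (enn2ereal Hx - ereal a) + ereal v * (enn2ereal Hy - ereal a)
      = ereal u * enn2ereal Hx + ereal v * enn2ereal Hy - ereal a"
  proof (cases "enn2ereal Hx"; cases "enn2ereal Hy")
    fix r s assume "enn2ereal Hx = ereal r" "enn2ereal Hy = ereal s"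
    then show ?thesis using uv by (simp add: algebra_simps) (metis distrib_left mult.commute mult_1)
  next
    fix r assume "enn2ereal Hx = ereal r" "enn2ereal Hy = \<infinity>"
    then show ?thesis using u v uv by (cases "v = 0") (auto simp: ereal_mult_infty)
  next
    fix r assume "enn2ereal Hx = \<infinity>" "enn2ereal Hy = ereal r"
    then show ?thesis using u v uv by (cases "u = 0") (auto simp: ereal_mult_infty)
  next
    assume "enn2ereal Hx = \<infinity>" "enn2ereal Hy = \<infinity>"
    then show ?thesis using u v uv by (cases "u = 0") (auto simp: ereal_mult_infty)
  qed (use u v uv in auto)
  then show ?thesis unfolding Ex Ey Ez using H' by (metis ereal_minus_mono order_refl)
qed

lemma INF_concave_ereal:
  fixes E :: "'i \<Rightarrow> real \<Rightarrow> ereal"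
  assumes conc: "\<And>i x y u v. i \<in> I \<Longrightarrow> 0 \<le> x \<Longrightarrow> 0 \<le> y \<Longrightarrow> 0 \<le> u \<Longrightarrow> 0 \<le> v \<Longrightarrow> u + v = 1
      \<Longrightarrow> ereal u * E i x + ereal v * E i y \<le> E i (u * x + v * y)"
    and fin: "\<And>x. 0 \<le> x \<Longrightarrow> \<bar>(INF i\<in>I. E i x)\<bar> \<noteq> \<infinity>"
  shows "concave_on {0..} (\<lambda>x. real_of_ereal (INF i\<in>I. E i x))"
  unfolding concave_on_iff
proof (intro conjI ballI allI impI)
  show "convex {0::real..}" by (rule convex_real_interval)
  fix x y :: real and u v :: real
  assume x: "x \<in> {0..}" and y: "y \<in> {0..}" and u: "0 \<le> u" and v: "0 \<le> v" and uv: "u + v = 1"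
  have z: "0 \<le> u * x + v * y" using x y u v by simp
  have "ereal u * (INF i\<in>I. E i x) + ereal v * (INF i\<in>I. E i y) \<le> (INF i\<in>I. E i (u * x + v * y))"
  proof (rule INF_greatest)
    fix i assume i: "i \<in> I"
    have "ereal u * (INF i\<in>I. E i x) \<le> ereal u * E i x"
      using u i by (intro ereal_mult_left_mono INF_lower) auto
    moreover have "ereal v * (INF i\<in>I. E i y) \<le> ereal v * E i y"
      using v i by (intro ereal_mult_left_mono INF_lower) auto
    ultimately have "ereal u * (INF i\<in>I. E i x) + ereal v * (INF i\<in>I. E i y) \<le> ereal u * E i x + ereal v * E i y"
      by (rule add_mono)
    also have "\<dots> \<le> E i (u * x + v * y)" using conc[OF i _ _ u v uv] x y by auto
    finally show "ereal u * (INF i\<in>I. E i x) + ereal v * (INF i\<in>I. E i y) \<le> E i (u * x + v * y)" .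
  qed
  moreover obtain a where a: "(INF i\<in>I. E i x) = ereal a" using fin[of x] x by (cases "(INF i\<in>I. E i x)") auto
  moreover obtain b where b: "(INF i\<in>I. E i y) = ereal b" using fin[of y] y by (cases "(INF i\<in>I. E i y)") auto
  moreover obtain d where d: "(INF i\<in>I. E i (u * x + v * y)) = ereal d" using fin[OF z] by (cases "(INF i\<in>I. E i (u * x + v * y))") auto
  ultimately show "u * real_of_ereal (INF i\<in>I. E i x) + v * real_of_ereal (INF i\<in>I. E i y)
      \<le> real_of_ereal (INF i\<in>I. E i (u *\<^sub>R x + v *\<^sub>R y))"
    by simp
qed

lemma INF_mono_ereal:
  fixes E :: "'i \<Rightarrow> real \<Rightarrow> ereal"
  assumes mono: "\<And>i x y. i \<in> I \<Longrightarrow> 0 \<le> x \<Longrightarrow> x \<le> y \<Longrightarrow> E i x \<le> E i y"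
    and fin: "\<And>x. 0 \<le> x \<Longrightarrow> \<bar>(INF i\<in>I. E i x)\<bar> \<noteq> \<infinity>"
  shows "mono_on {0..} (\<lambda>x. real_of_ereal (INF i\<in>I. E i x))"
proof (rule mono_onI)
  fix x y :: real assume x: "x \<in> {0..}" and xy: "x \<le> y"
  have "(INF i\<in>I. E i x) \<le> (INF i\<in>I. E i y)"
    using mono x xy by (intro INF_mono) (auto intro: bexI)
  moreover have "0 \<le> y" using x xy by simp
  moreover obtain a where a: "(INF i\<in>I. E i x) = ereal a" using fin[of x] x by (cases "(INF i\<in>I. E i x)") auto
  moreover obtain b where b: "(INF i\<in>I. E i y) = ereal b" using fin[of y] \<open>0 \<le> y\<close> by (cases "(INF i\<in>I. E i y)") auto
  ultimately show "real_of_ereal (INF i\<in>I. E i x) \<le> real_of_ereal (INF i\<in>I. E i y)"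
    by simp
qed

lemma floor_approx_tendsto:
  "(\<lambda>k. real_of_int \<lfloor>t * real (Suc k)\<rfloor> / real (Suc k)) \<longlonglongrightarrow> (t::real)"
proof (rule tendsto_sandwich[where f="\<lambda>k. t - inverse (real (Suc k))" and h="\<lambda>k. t"])
  show "\<forall>\<^sub>F k in sequentially. t - inverse (real (Suc k)) \<le> real_of_int \<lfloor>t * real (Suc k)\<rfloor> / real (Suc k)"
  proof (rule always_eventually, rule allI)
    fix k
    define n where "n = real (Suc k)"
    have n: "0 < n" unfolding n_def by simp
    have "t * n - 1 \<le> real_of_int \<lfloor>t * n\<rfloor>" by linarith
    then have "(t * n - 1) / n \<le> real_of_int \<lfloor>t * n\<rfloor> / n" using n by (intro divide_right_mono) auto
    moreover have "(t * n - 1) / n = t - inverse n" using n by (simp add: field_simps)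
    ultimately show "t - inverse (real (Suc k)) \<le> real_of_int \<lfloor>t * real (Suc k)\<rfloor> / real (Suc k)"
      unfolding n_def by simp
  qed
  show "\<forall>\<^sub>F k in sequentially. real_of_int \<lfloor>t * real (Suc k)\<rfloor> / real (Suc k) \<le> t"
  proof (rule always_eventually, rule allI)
    fix k
    define n where "n = real (Suc k)"
    have n: "0 < n" unfolding n_def by simp
    have "real_of_int \<lfloor>t * n\<rfloor> \<le> t * n" by linarith
    then have "real_of_int \<lfloor>t * n\<rfloor> / n \<le> t * n / n" using n by (intro divide_right_mono) auto
    then show "real_of_int \<lfloor>t * real (Suc k)\<rfloor> / real (Suc k) \<le> t"
      using n unfolding n_def by simp
  qed
  show "(\<lambda>k. t - inverse (real (Suc k))) \<longlonglongrightarrow> t"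
    using tendsto_diff[OF tendsto_const LIMSEQ_inverse_real_of_nat, of t] by simp
qed simp

lemma joint_measurable_continuous:
  fixes Y :: "'a \<Rightarrow> real \<Rightarrow> real"
  assumes m: "\<And>t. (\<lambda>\<omega>. Y \<omega> t) \<in> borel_measurable M"
    and cont: "\<And>\<omega>. continuous_on UNIV (Y \<omega>)"
  shows "(\<lambda>p. Y (fst p) (snd p)) \<in> borel_measurable (M \<Otimes>\<^sub>M lborel)"
proof (rule borel_measurable_LIMSEQ_real)
  let ?u = "\<lambda>k p. Y (fst p) (real_of_int \<lfloor>snd p * real (Suc k)\<rfloor> / real (Suc k))"
  show "(\<lambda>k. ?u k p) \<longlonglongrightarrow> Y (fst p) (snd p)" for p
  proof -
    have "isCont (Y (fst p)) (snd p)" using cont continuous_on_eq_continuous_at by blast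
    then show ?thesis by (rule isCont_tendsto_compose) (rule floor_approx_tendsto)
  qed
  show "?u k \<in> borel_measurable (M \<Otimes>\<^sub>M lborel)" for k
  proof -
    have A: "(\<lambda>p. Y (fst p) (real_of_int i / real (Suc k))) \<in> borel_measurable (M \<Otimes>\<^sub>M lborel)" for i
      by (rule measurable_compose[OF measurable_fst m])
    have "(\<lambda>p. snd p * real (Suc k)) \<in> borel_measurable (M \<Otimes>\<^sub>M lborel)" by measurable
    then have B: "(\<lambda>p. \<lfloor>snd p * real (Suc k)\<rfloor>) \<in> measurable (M \<Otimes>\<^sub>M lborel) (count_space UNIV)"
      using measurable_compose[OF _ measurable_real_floor] by blast
    show ?thesis
      using measurable_compose_countable'[where f="\<lambda>i p. Y (fst p) (real_of_int i / real (Suc k))"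
          and g="\<lambda>p. \<lfloor>snd p * real (Suc k)\<rfloor>" and I=UNIV, OF A B] by simp
  qed
qed

locale ctx =
  fixes M :: "'a measure" and lam mu c lam0 lam1 :: real and f :: "'e \<Rightarrow> real"
    and X :: "real \<Rightarrow> 'a \<Rightarrow> real" and T :: "nat \<Rightarrow> 'a \<Rightarrow> real" and Z :: "nat \<Rightarrow> 'a \<Rightarrow> 'e"
  assumes M: "prob_space M" and lam: "0 < lam" and c: "0 < c" and lam0: "0 < lam0" and lam1: "0 < lam1"
    and fnn: "\<And>z. 0 \<le> f z"
    and Xm: "\<And>t. X t \<in> borel_measurable M"
    and Xc: "AE \<omega> in M. continuous_on {0..} (\<lambda>t. X t \<omega>)"
    and Tm: "\<And>n. T (Suc n) \<in> borel_measurable M"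
    and Tpos: "AE \<omega> in M. 0 < T 1 \<omega>"
    and Tinc: "AE \<omega> in M. \<forall>n\<ge>1. T n \<omega> < T (Suc n) \<omega>"
    and Km: "(\<lambda>\<omega>. f (Z 1 \<omega>)) \<in> borel_measurable M"
begin

abbreviation "kap \<equiv> mu\<^sup>2 / 2 + lam1 - lam0"
abbreviation "Ph \<equiv> Phi lam mu lam0 lam1 f X T Z"
abbreviation "LP \<equiv> Lproc mu lam0 lam1 f X T Z"
abbreviation "LR \<equiv> Lratio mu lam0 lam1 f X T Z"
abbreviation "pay \<equiv> payoff lam mu c lam0 lam1 f X T Z"
abbreviation "Kf \<equiv> (\<lambda>\<omega>. lam1 / lam0 * f (Z 1 \<omega>))"

lemma T1m[measurable]: "T 1 \<in> borel_measurable M" using Tm[of 0] by simp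

lemma Kfm[measurable]: "Kf \<in> borel_measurable M" using Km by measurable

lemma Kf_nonneg: "0 \<le> Kf \<omega>" using lam0 lam1 fnn by simp

lemma LP_nonneg: "0 \<le> LP t \<omega>"
  unfolding Lproc_def using lam0 lam1 fnn by (intro mult_nonneg_nonneg prod_nonneg) auto

lemma LR_nonneg: "0 \<le> LR s t \<omega>"
  unfolding Lratio_def using lam0 lam1 fnn by (intro mult_nonneg_nonneg prod_nonneg) auto

lemma Ph0_nonneg: "0 \<le> Ph 0 t \<omega>"
  unfolding Phi_def set_lebesgue_integral_def using lam LR_nonneg
  by (auto intro!: integral_nonneg mult_nonneg_nonneg simp: indicator_def)

lemma Ph_affine: "Ph \<phi> t \<omega> = \<phi> * (exp (lam * t) * LP t \<omega>) + Ph 0 t \<omega>"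
  unfolding Phi_def by simp

lemma Ph_nonneg: "0 \<le> \<phi> \<Longrightarrow> 0 \<le> Ph \<phi> t \<omega>"
  using Ph_affine[of \<phi> t \<omega>] Ph0_nonneg[of t \<omega>] LP_nonneg[of t \<omega>] by simp

definition good :: "'a \<Rightarrow> bool" where
  "good \<omega> \<longleftrightarrow> continuous_on {0..} (\<lambda>t. X t \<omega>) \<and> 0 < T 1 \<omega> \<and> (\<forall>n\<ge>1. T n \<omega> < T (Suc n) \<omega>)"

lemma AE_good: "AE \<omega> in M. good \<omega>"
  using Xc Tpos Tinc unfolding good_def by eventually_elim auto

lemma exG: "\<exists>G. G \<in> sets M \<and> G \<subseteq> space M \<and> (\<forall>\<omega>\<in>G. good \<omega>) \<and> (AE \<omega> in M. \<omega> \<in> G)"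
proof -
  obtain N where N: "{x \<in> space M. \<not> good x} \<subseteq> N" "emeasure M N = 0" "N \<in> sets M"
    using AE_good by (rule AE_E)
  define G where "G = space M - N"
  have "G \<in> sets M" unfolding G_def using N by auto
  moreover have "AE \<omega> in M. \<omega> \<in> G"
    by (rule AE_I'[of N]) (use N in \<open>auto simp: G_def\<close>)
  moreover have "\<forall>\<omega>\<in>G. good \<omega>" using N unfolding G_def by auto
  ultimately show ?thesis unfolding G_def by auto
qed

lemma good_T_ge: assumes "good \<omega>" "1 \<le> n" shows "T 1 \<omega> \<le> T n \<omega>"
  using assms(2)
proof (induction n rule: dec_induct)
  case (step n)
  then show ?case using assms(1) unfolding good_def by (meson less_imp_le order_trans)
qed simp

lemma good_T_gt: assumes "good \<omega>" "2 \<le> n" shows "T 1 \<omega> < T n \<omega>"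
proof -
  obtain m where m: "n = Suc m" "1 \<le> m" using assms(2) by (cases n) auto
  then show ?thesis using good_T_ge[OF assms(1) m(2)] assms(1) unfolding good_def by force
qed

lemma good_T1: "good \<omega> \<Longrightarrow> 0 < T 1 \<omega>" unfolding good_def by simp

lemma LP_before: assumes "good \<omega>" "t < T 1 \<omega>"
  shows "LP t \<omega> = exp (mu * X t \<omega> - kap * t)"
proof -
  have e: "{n. 1 \<le> n \<and> T n \<omega> \<le> t} = {}" using good_T_ge[OF assms(1)] assms(2) by force
  show ?thesis unfolding Lproc_def e by simp
qed

lemma LR_before: assumes "good \<omega>" "t < T 1 \<omega>"
  shows "LR s t \<omega> = exp (mu * (X t \<omega> - X s \<omega>) - kap * (t - s))"
proof -
  have e: "{n. 1 \<le> n \<and> s < T n \<omega> \<and> T n \<omega> \<le> t} = {}" using good_T_ge[OF assms(1)] assms(2) by force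
  show ?thesis unfolding Lratio_def e by simp
qed

lemma set_at_T1: assumes "good \<omega>" "s < T 1 \<omega>"
  shows "{n. 1 \<le> n \<and> s < T n \<omega> \<and> T n \<omega> \<le> T 1 \<omega>} = {1}"
proof -
  have "n = 1" if "1 \<le> n" "T n \<omega> \<le> T 1 \<omega>" for n
    using good_T_gt[OF assms(1), of n] that by (cases "2 \<le> n") auto
  then show ?thesis using assms(2) by auto
qed

lemma LP_at: assumes "good \<omega>"
  shows "LP (T 1 \<omega>) \<omega> = exp (mu * X (T 1 \<omega>) \<omega> - kap * T 1 \<omega>) * Kf \<omega>"
proof -
  have "{n. 1 \<le> n \<and> T n \<omega> \<le> T 1 \<omega>} = {1}"
  proof -
    have "n = 1" if "1 \<le> n" "T n \<omega> \<le> T 1 \<omega>" for n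
      using good_T_gt[OF assms(1), of n] that by (cases "2 \<le> n") auto
    then show ?thesis by auto
  qed
  then show ?thesis unfolding Lproc_def by simp
qed

lemma LR_at: assumes "good \<omega>" "s < T 1 \<omega>"
  shows "LR s (T 1 \<omega>) \<omega> = exp (mu * (X (T 1 \<omega>) \<omega> - X s \<omega>) - kap * (T 1 \<omega> - s)) * Kf \<omega>"
  unfolding Lratio_def set_at_T1[OF assms] by simp

lemma LR_diag: "LR t t \<omega> = 1"
proof -
  have e: "{n. 1 \<le> n \<and> t < T n \<omega> \<and> T n \<omega> \<le> t} = {}" by auto
  show ?thesis unfolding Lratio_def e by simp
qed

end

lemma exp_set_int:
  fixes lam m :: real
  assumes lam: "0 < lam" and m: "0 \<le> m"
  shows "set_integrable lborel {0..<m} (\<lambda>t. exp (- lam * t))"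
    and "(LINT t:{0..<m}|lborel. exp (- lam * t)) = (1 - exp (- lam * m)) / lam"
proof -
  have cont: "continuous_on {0..m} (\<lambda>t. exp (- lam * t))" by (intro continuous_intros)
  have i1: "set_integrable lborel {0..m} (\<lambda>t. exp (- lam * t))"
    by (rule borel_integrable_atLeastAtMost'[OF cont])
  have d: "{0..m} - {0..<m} \<union> ({0..<m} - {0..m}) \<subseteq> {m}" by auto
  have eq: "set_integrable lborel {0..<m} F = set_integrable lborel {0..m} F" for F :: "real \<Rightarrow> real"
    by (rule set_integrable_discrete_difference[where X="{m}"]) auto
  show "set_integrable lborel {0..<m} (\<lambda>t. exp (- lam * t))"
    using i1 eq by simp
  have "(LINT t:{0..m}|lborel. exp (- lam * t)) = (- exp (- lam * m) / lam) - (- exp (- lam * 0) / lam)"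
    unfolding set_lebesgue_integral_def
  proof (rule integral_FTC_atLeastAtMost[OF m _ cont])
    fix x assume "0 \<le> x" "x \<le> m"
    have "((\<lambda>t. - exp (- lam * t) / lam) has_real_derivative (- (exp (- lam * x) * (- lam)) / lam)) (at x)"
      by (auto intro!: derivative_eq_intros)
    then show "((\<lambda>t. - exp (- lam * t) / lam) has_vector_derivative exp (- lam * x)) (at x within {0..m})"
      using lam by (auto simp: has_real_derivative_iff_has_vector_derivative[symmetric] intro: has_field_derivative_at_within)
  qed
  moreover have "(LINT t:{0..<m}|lborel. exp (- lam * t)) = (LINT t:{0..m}|lborel. exp (- lam * t))"
    by (rule set_integral_discrete_difference[where X="{m}"]) auto
  ultimately show "(LINT t:{0..<m}|lborel. exp (- lam * t)) = (1 - exp (- lam * m)) / lam"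
    using lam by (simp add: field_simps)
qed

context ctx begin

abbreviation "J \<equiv> Jop M lam mu c lam0 lam1 f X T Z"
abbreviation "ST \<equiv> {\<tau>. stopping_time (natfilt M X) \<tau>}"

lemma pay_lower:
  assumes T1: "0 < T 1 \<omega>" and phi: "0 \<le> \<phi>" and w: "\<And>x. 0 \<le> x \<Longrightarrow> - 1 / c \<le> w x"
  shows "- 1 / c \<le> pay \<tau> w \<phi> \<omega>"
proof -
  define mm where "mm = min (\<tau> \<omega>) (ennreal (T 1 \<omega>))"
  have "mm \<le> ennreal (T 1 \<omega>)" unfolding mm_def by simp
  then have mm_top: "mm < top" using ennreal_less_top[of "T 1 \<omega>"] by (rule le_less_trans)
  define m where "m = enn2real mm"
  have m0: "0 \<le> m" unfolding m_def by simp
  have mm_eq: "mm = ennreal m" unfolding m_def using mm_top by simp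
  have mT: "m \<le> T 1 \<omega>" using \<open>mm \<le> ennreal (T 1 \<omega>)\<close> T1 unfolding mm_eq by (simp add: ennreal_le_iff)
  have mT2: "ennreal (T 1 \<omega>) \<le> \<tau> \<omega> \<Longrightarrow> m = T 1 \<omega>"
    using mm_eq T1 unfolding mm_def by (metis enn2real_ennreal less_imp_le m_def min.absorb2 mm_def)
  have S: "{t. 0 \<le> t \<and> ennreal t < min (\<tau> \<omega>) (ennreal (T 1 \<omega>))} = {0..<m}"
    unfolding mm_def[symmetric] mm_eq using m0 by (auto simp: ennreal_less_iff)
  define g where "g t = exp (- lam * t) * (Ph \<phi> t \<omega> - lam / c)" for t
  define e where "e = exp (- lam * m)"
  have e: "0 \<le> e" "e \<le> 1" using lam m0 unfolding e_def by auto
  have L: "- (1 / c) * (1 - e) \<le> (LINT t:{0..<m}|lborel. g t)"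
  proof (cases "set_integrable lborel {0..<m} g")
    case True
    have "(LINT t:{0..<m}|lborel. (- (lam / c)) * exp (- lam * t)) \<le> (LINT t:{0..<m}|lborel. g t)"
    proof (rule set_integral_mono[OF _ True])
      show "set_integrable lborel {0..<m} (\<lambda>t. (- (lam / c)) * exp (- lam * t))"
        using exp_set_int(1)[OF lam m0] by (rule set_integrable_mult_right)
      fix t assume "t \<in> {0..<m}"
      have "0 \<le> Ph \<phi> t \<omega>" using Ph_nonneg[OF phi] .
      then show "- (lam / c) * exp (- lam * t) \<le> g t" unfolding g_def
        by (simp add: algebra_simps)
    qed
    also note set_integral_mult_right
    finally show ?thesis using exp_set_int(2)[OF lam m0] lam c unfolding e_def by (simp add: field_simps)
  next
    case False
    then have "(LINT t:{0..<m}|lborel. g t) = 0"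
      unfolding set_integrable_def set_lebesgue_integral_def by (rule not_integrable_integral_eq)
    then show ?thesis using e c by (simp add: mult_le_0_iff)
  qed
  have pay_eq: "pay \<tau> w \<phi> \<omega> = (LINT t:{0..<m}|lborel. g t) +
      (if ennreal (T 1 \<omega>) \<le> \<tau> \<omega> then exp (- lam * T 1 \<omega>) * w (Ph \<phi> (T 1 \<omega>) \<omega>) else 0)"
    unfolding payoff_def S g_def ..
  show ?thesis
  proof (cases "ennreal (T 1 \<omega>) \<le> \<tau> \<omega>")
    case True
    then have mT1: "m = T 1 \<omega>" by (rule mT2)
    have "- 1 / c \<le> w (Ph \<phi> (T 1 \<omega>) \<omega>)" using w Ph_nonneg[OF phi] by blast
    then have "e * (- 1 / c) \<le> e * w (Ph \<phi> (T 1 \<omega>) \<omega>)" using e by (intro mult_left_mono) auto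
    moreover have "- 1 / c = - (1 / c) * (1 - e) + e * (- 1 / c)" using c by (simp add: field_simps)
    moreover have "pay \<tau> w \<phi> \<omega> = (LINT t:{0..<m}|lborel. g t) + e * w (Ph \<phi> (T 1 \<omega>) \<omega>)"
      unfolding pay_eq e_def mT1 using True by simp
    ultimately show ?thesis using L by linarith
  next
    case False
    then show ?thesis using L e c unfolding pay_eq by (simp add: field_simps)
  qed
qed

lemma pay_zero: assumes "0 < T 1 \<omega>" shows "pay (\<lambda>_. 0) w \<phi> \<omega> = 0"
proof -
  have e: "{t. 0 \<le> t \<and> ennreal t < min 0 (ennreal (T 1 \<omega>))} = {}" by simp
  have "\<not> ennreal (T 1 \<omega>) \<le> 0" using assms by (simp add: ennreal_le_iff2)
  then show ?thesis unfolding payoff_def e set_lebesgue_integral_def by simp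
qed

lemma J_le0: "J w \<phi> \<le> 0"
proof -
  have "J w \<phi> \<le> eexp M (pay (\<lambda>_. 0) w \<phi>)"
    unfolding Jop_def by (rule INF_lower) (simp add: stopping_time_const)
  also have "eexp M (pay (\<lambda>_. 0) w \<phi>) = 0"
    by (rule eexp_zero_AE) (use Tpos in \<open>auto elim!: eventually_mono simp: pay_zero\<close>)
  finally show ?thesis .
qed

lemma J_ge: assumes w: "\<And>x. 0 \<le> x \<Longrightarrow> - 1 / c \<le> w x" and phi: "0 \<le> \<phi>"
  shows "- ereal (1 / c) \<le> J w \<phi>"
  unfolding Jop_def
proof (rule INF_greatest)
  fix \<tau> assume "\<tau> \<in> ST"
  show "- ereal (1 / c) \<le> eexp M (pay \<tau> w \<phi>)"
  proof (rule eexp_ge[OF M])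
    show "0 \<le> 1 / c" using c by simp
    show "AE x in M. - (1 / c) \<le> pay \<tau> w \<phi> x"
      using Tpos by eventually_elim (use pay_lower[OF _ phi w] in auto)
  qed
qed

lemma pay_mono_w: assumes w: "\<And>x. 0 \<le> x \<Longrightarrow> w1 x \<le> w2 x" and phi: "0 \<le> \<phi>"
  shows "pay \<tau> w1 \<phi> \<omega> \<le> pay \<tau> w2 \<phi> \<omega>"
  unfolding payoff_def using w[OF Ph_nonneg[OF phi]] by (auto intro!: mult_left_mono)

lemma J_mono: assumes w: "\<And>x. 0 \<le> x \<Longrightarrow> w1 x \<le> w2 x" and phi: "0 \<le> \<phi>"
  shows "J w1 \<phi> \<le> J w2 \<phi>"
  unfolding Jop_def
  by (rule INF_mono) (auto intro!: bexI eexp_mono_AE AE_I2 pay_mono_w[OF w phi])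

end

context ctx begin

lemma natfilt_space: "space (natfilt M X t) = space M"
  unfolding natfilt_def by (rule space_measure_of) auto

lemma natfilt_sets: "sets (natfilt M X t) \<subseteq> sets M"
proof -
  have sub: "(\<Union>s\<in>{s. 0 \<le> s \<and> ennreal s \<le> t}. {X s -` B \<inter> space M | B. B \<in> sets borel}) \<subseteq> sets M"
    using Xm by (auto simp: measurable_def)
  then have "(\<Union>s\<in>{s. 0 \<le> s \<and> ennreal s \<le> t}. {X s -` B \<inter> space M | B. B \<in> sets borel}) \<subseteq> Pow (space M)"
    using sets.sets_into_space by blast
  then have "sets (natfilt M X t) = sigma_sets (space M) (\<Union>s\<in>{s. 0 \<le> s \<and> ennreal s \<le> t}. {X s -` B \<inter> space M | B. B \<in> sets borel})"
    unfolding natfilt_def by (rule sets_measure_of)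
  also have "\<dots> \<subseteq> sets M" using sub by (rule sets.sigma_sets_subset)
  finally show ?thesis .
qed

lemma ST_meas: "\<tau> \<in> ST \<Longrightarrow> \<tau> \<in> borel_measurable M"
  by (rule measurable_stopping_time[where F="natfilt M X"]) (use natfilt_sets natfilt_space in auto)

definition Xp :: "'a set \<Rightarrow> 'a \<times> real \<Rightarrow> real" where
  "Xp G p = (if fst p \<in> G then X (max 0 (snd p)) (fst p) else 0)"

lemma Xp_cont: assumes G: "\<forall>\<omega>\<in>G. good \<omega>" shows "continuous_on UNIV (\<lambda>t. Xp G (\<omega>, t))"
proof (cases "\<omega> \<in> G")
  case True
  then have c: "continuous_on {0..} (\<lambda>t. X t \<omega>)" using G unfolding good_def by auto
  have "continuous_on UNIV (\<lambda>t. X (max 0 t) \<omega>)"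
    by (rule continuous_on_compose2[OF c, where f="\<lambda>t. max 0 t"]) (auto intro!: continuous_intros)
  then show ?thesis using True unfolding Xp_def by simp
next
  case False then show ?thesis unfolding Xp_def by simp
qed

lemma Xp_meas[measurable]: assumes G: "\<forall>\<omega>\<in>G. good \<omega>" and Gm: "G \<in> sets M"
  shows "Xp G \<in> borel_measurable (M \<Otimes>\<^sub>M lborel)"
proof -
  have m: "(\<lambda>\<omega>. Xp G (\<omega>, t)) \<in> borel_measurable M" for t
    unfolding Xp_def fst_conv snd_conv
    by (rule measurable_If_set) (use Xm Gm in auto)
  have "(\<lambda>p. (\<lambda>\<omega> t. Xp G (\<omega>, t)) (fst p) (snd p)) \<in> borel_measurable (M \<Otimes>\<^sub>M lborel)"
    by (rule joint_measurable_continuous[OF m Xp_cont[OF G]])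
  then show ?thesis by simp
qed

lemma Xp_eq: "\<omega> \<in> G \<Longrightarrow> 0 \<le> t \<Longrightarrow> Xp G (\<omega>, t) = X t \<omega>"
  unfolding Xp_def by simp

end

context ctx begin
definition Sset :: "('a \<Rightarrow> ennreal) \<Rightarrow> 'a \<Rightarrow> real set" where
  "Sset \<tau> \<omega> = {t. 0 \<le> t \<and> ennreal t < min (\<tau> \<omega>) (ennreal (T 1 \<omega>))}"

lemma Sset_meas:
  assumes [measurable]: "\<tau> \<in> borel_measurable M"
  shows "(\<lambda>p. indicator (Sset \<tau> (fst p)) (snd p) :: real) \<in> borel_measurable (M \<Otimes>\<^sub>M lborel)"
proof -
  have "(\<lambda>p. indicator (Sset \<tau> (fst p)) (snd p) :: real) =
      (\<lambda>p. if 0 \<le> snd p \<and> ennreal (snd p) < min (\<tau> (fst p)) (ennreal (T 1 (fst p))) then 1 else 0)"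
    by (auto simp: Sset_def indicator_def fun_eq_iff)
  also have "\<dots> \<in> borel_measurable (M \<Otimes>\<^sub>M lborel)" by measurable
  finally show ?thesis .
qed

lemma Sset_sub: "t \<in> Sset \<tau> \<omega> \<Longrightarrow> 0 < T 1 \<omega> \<Longrightarrow> 0 \<le> t \<and> t < T 1 \<omega>"
  unfolding Sset_def by (auto simp: ennreal_less_iff)

lemma Sset_sets: "Sset \<tau> \<omega> \<in> sets lborel"
proof -
  have "Sset \<tau> \<omega> = {t. 0 \<le> t} \<inter> {t. ennreal t < min (\<tau> \<omega>) (ennreal (T 1 \<omega>))}" unfolding Sset_def by auto
  also have "\<dots> \<in> sets lborel" by measurable
  finally show ?thesis .
qed

lemma pay_UV: "pay \<tau> w \<phi> \<omega> =
   (\<integral>t. \<phi> * (indicator (Sset \<tau> \<omega>) t * (exp (- lam * t) * (exp (lam * t) * LP t \<omega>)))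
        + indicator (Sset \<tau> \<omega>) t * (exp (- lam * t) * (Ph 0 t \<omega> - lam / c)) \<partial>lborel)
   + (if ennreal (T 1 \<omega>) \<le> \<tau> \<omega> then exp (- lam * T 1 \<omega>) * w (Ph \<phi> (T 1 \<omega>) \<omega>) else 0)"
  unfolding payoff_def set_lebesgue_integral_def Sset_def[symmetric]
  by (intro arg_cong2[where f="(+)"] integral_cong refl)
     (subst Ph_affine, simp add: algebra_simps)
end

locale ctxG = ctx +
  fixes G :: "'a set"
  assumes Gm: "G \<in> sets M" and Gsub: "G \<subseteq> space M" and Ggood: "\<forall>\<omega>\<in>G. good \<omega>"
    and GAE: "AE \<omega> in M. \<omega> \<in> G"
begin

lemma Xpm[measurable]: "Xp G \<in> borel_measurable (M \<Otimes>\<^sub>M lborel)"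
  by (rule Xp_meas[OF Ggood Gm])

definition Ep :: "'a \<times> real \<Rightarrow> real" where
  "Ep p = exp (mu * Xp G p - kap * snd p)"

definition hp :: "'a \<Rightarrow> real \<Rightarrow> real \<Rightarrow> real" where
  "hp \<omega> t s = lam * exp (lam * (t - s)) * exp (mu * (Xp G (\<omega>, t) - Xp G (\<omega>, s)) - kap * (t - s))"

definition Bp :: "'a \<Rightarrow> real \<Rightarrow> real" where
  "Bp \<omega> t = (LINT s:{0..t}|lborel. hp \<omega> t s)"

lemma Epm[measurable]: "Ep \<in> borel_measurable (M \<Otimes>\<^sub>M lborel)"
  unfolding Ep_def by measurable

lemma Bpm: "(\<lambda>p. Bp (fst p) (snd p)) \<in> borel_measurable (M \<Otimes>\<^sub>M lborel)"
proof -
  have "(\<lambda>q. indicator {0..snd (fst q)} (snd q) *\<^sub>R hp (fst (fst q)) (snd (fst q)) (snd q) :: real)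
      \<in> borel_measurable ((M \<Otimes>\<^sub>M lborel) \<Otimes>\<^sub>M lborel)"
  proof -
    have m0: "(\<lambda>x::('a \<times> real) \<times> real. (fst (fst x), snd x)) \<in> measurable ((M \<Otimes>\<^sub>M lborel) \<Otimes>\<^sub>M lborel) (M \<Otimes>\<^sub>M lborel)"
      by measurable
    have m1[measurable]: "(\<lambda>x::('a \<times> real) \<times> real. Xp G (fst (fst x), snd (fst x))) \<in> borel_measurable ((M \<Otimes>\<^sub>M lborel) \<Otimes>\<^sub>M lborel)"
      using measurable_compose[OF measurable_fst Xpm] by simp
    have m2[measurable]: "(\<lambda>x::('a \<times> real) \<times> real. Xp G (fst (fst x), snd x)) \<in> borel_measurable ((M \<Otimes>\<^sub>M lborel) \<Otimes>\<^sub>M lborel)"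
      using measurable_compose[OF m0 Xpm] by simp
    have e: "(\<lambda>q. indicator {0..snd (fst q)} (snd q) *\<^sub>R hp (fst (fst q)) (snd (fst q)) (snd q) :: real)
      = (\<lambda>q. (if 0 \<le> snd q \<and> snd q \<le> snd (fst q) then 1 else 0) * (lam * exp (lam * (snd (fst q) - snd q)) *
          exp (mu * (Xp G (fst (fst q), snd (fst q)) - Xp G (fst (fst q), snd q)) - kap * (snd (fst q) - snd q))))"
      by (auto simp: hp_def indicator_def fun_eq_iff)
    show ?thesis unfolding e by measurable
  qed
  then have "(\<lambda>p. \<integral>s. indicator {0..snd p} s *\<^sub>R hp (fst p) (snd p) s \<partial>lborel) \<in> borel_measurable (M \<Otimes>\<^sub>M lborel)"
    by (intro lborel.borel_measurable_lebesgue_integral) (simp add: case_prod_beta')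
  then show ?thesis unfolding Bp_def set_lebesgue_integral_def .
qed

end

context ctxG begin

definition Up :: "('a \<Rightarrow> ennreal) \<Rightarrow> 'a \<Rightarrow> real \<Rightarrow> real" where
  "Up \<tau> \<omega> t = indicator (Sset \<tau> \<omega>) t * (exp (- lam * t) * (exp (lam * t) * Ep (\<omega>, t)))"

definition Vp :: "('a \<Rightarrow> ennreal) \<Rightarrow> 'a \<Rightarrow> real \<Rightarrow> real" where
  "Vp \<tau> \<omega> t = indicator (Sset \<tau> \<omega>) t * (exp (- lam * t) * (Bp \<omega> t - lam / c))"

lemma Ph0_before: assumes "\<omega> \<in> G" "0 \<le> t" "t < T 1 \<omega>" shows "Ph 0 t \<omega> = Bp \<omega> t"
proof -
  have g: "good \<omega>" using assms Ggood by auto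
  have "Ph 0 t \<omega> = (LINT s:{0..t}|lborel. lam * exp (lam * (t - s)) * LR s t \<omega>)"
    unfolding Phi_def by simp
  also have "\<dots> = Bp \<omega> t" unfolding Bp_def
  proof (rule set_lebesgue_integral_cong)
    show "\<forall>s. s \<in> {0..t} \<longrightarrow> lam * exp (lam * (t - s)) * LR s t \<omega> = hp \<omega> t s"
      using assms by (auto simp: LR_before[OF g assms(3)] hp_def Xp_eq)
  qed simp
  finally show ?thesis .
qed

lemma UV_eq: assumes "\<omega> \<in> G"
  shows "indicator (Sset \<tau> \<omega>) t * (exp (- lam * t) * (exp (lam * t) * LP t \<omega>)) = Up \<tau> \<omega> t"
    and "indicator (Sset \<tau> \<omega>) t * (exp (- lam * t) * (Ph 0 t \<omega> - lam / c)) = Vp \<tau> \<omega> t"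
proof -
  have g: "good \<omega>" using assms Ggood by auto
  have "LP t \<omega> = Ep (\<omega>, t) \<and> Ph 0 t \<omega> = Bp \<omega> t" if t: "t \<in> Sset \<tau> \<omega>"
  proof -
    have tt: "0 \<le> t" "t < T 1 \<omega>" using Sset_sub[OF t good_T1[OF g]] by auto
    show ?thesis using LP_before[OF g tt(2)] Ph0_before[OF assms tt] Xp_eq[OF assms tt(1)]
      by (simp add: Ep_def)
  qed
  then show "indicator (Sset \<tau> \<omega>) t * (exp (- lam * t) * (exp (lam * t) * LP t \<omega>)) = Up \<tau> \<omega> t"
    and "indicator (Sset \<tau> \<omega>) t * (exp (- lam * t) * (Ph 0 t \<omega> - lam / c)) = Vp \<tau> \<omega> t"
    unfolding Up_def Vp_def by (auto simp: indicator_def)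
qed

lemma Upm: assumes [measurable]: "\<tau> \<in> borel_measurable M"
  shows "(\<lambda>p. Up \<tau> (fst p) (snd p)) \<in> borel_measurable (M \<Otimes>\<^sub>M lborel)"
proof -
  note Sset_meas[OF assms, measurable]
  have [measurable]: "(\<lambda>p. Ep (fst p, snd p)) \<in> borel_measurable (M \<Otimes>\<^sub>M lborel)" by simp
  show ?thesis unfolding Up_def by measurable
qed

lemma Vpm: assumes [measurable]: "\<tau> \<in> borel_measurable M"
  shows "(\<lambda>p. Vp \<tau> (fst p) (snd p)) \<in> borel_measurable (M \<Otimes>\<^sub>M lborel)"
proof -
  note Sset_meas[OF assms, measurable] Bpm[measurable]
  show ?thesis unfolding Vp_def by measurable
qed

lemma X_bound: assumes "\<omega> \<in> G" obtains C where "\<And>t. 0 \<le> t \<Longrightarrow> t \<le> T 1 \<omega> \<Longrightarrow> \<bar>X t \<omega>\<bar> \<le> C"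
proof -
  have "continuous_on {0..T 1 \<omega>} (\<lambda>t. X t \<omega>)"
    using assms Ggood unfolding good_def by (auto intro: continuous_on_subset)
  then have "compact ((\<lambda>t. X t \<omega>) ` {0..T 1 \<omega>})" by (rule compact_continuous_image) simp
  then have "bounded ((\<lambda>t. X t \<omega>) ` {0..T 1 \<omega>})" by (rule compact_imp_bounded)
  then obtain C where "\<forall>x\<in>(\<lambda>t. X t \<omega>) ` {0..T 1 \<omega>}. norm x \<le> C" unfolding bounded_iff by blast
  then show ?thesis using that[of C] by auto
qed

end

context ctxG begin

lemma hp_cont: "continuous_on UNIV (hp \<omega> t)"
  unfolding hp_def using Xp_cont[OF Ggood, of \<omega>] by (intro continuous_intros) auto

lemma Up_nonneg: "0 \<le> Up \<tau> \<omega> t" unfolding Up_def Ep_def by simp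

lemma UV_int: assumes w: "\<omega> \<in> G" and tm: "\<tau> \<in> borel_measurable M"
  shows "integrable lborel (Up \<tau> \<omega>)" and "integrable lborel (Vp \<tau> \<omega>)"
proof -
  have g: "good \<omega>" using w Ggood by auto
  define D where "D = T 1 \<omega>"
  have D: "0 < D" using good_T1[OF g] unfolding D_def .
  obtain C where C: "\<And>t. 0 \<le> t \<Longrightarrow> t \<le> D \<Longrightarrow> \<bar>X t \<omega>\<bar> \<le> C" using X_bound[OF w] unfolding D_def by blast
  define Q where "Q = \<bar>mu\<bar> * C + \<bar>kap\<bar> * D"
  have qb: "\<bar>mu * Xp G (\<omega>, t) - kap * t\<bar> \<le> Q" if "0 \<le> t" "t \<le> D" for t
  proof -
    have "\<bar>mu * Xp G (\<omega>, t) - kap * t\<bar> \<le> \<bar>mu\<bar> * \<bar>X t \<omega>\<bar> + \<bar>kap\<bar> * t"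
      using that Xp_eq[OF w that(1)] by (metis abs_mult abs_of_nonneg abs_triangle_ineq4)
    also have "\<dots> \<le> \<bar>mu\<bar> * C + \<bar>kap\<bar> * D"
      using C[OF that] that by (intro add_mono mult_left_mono) auto
    finally show ?thesis unfolding Q_def .
  qed
  define K2 where "K2 = lam * exp (lam * D) * exp (2 * Q)"
  have hb: "0 \<le> hp \<omega> t s \<and> hp \<omega> t s \<le> K2" if "0 \<le> s" "s \<le> t" "t \<le> D" for s t
  proof -
    have e: "mu * (Xp G (\<omega>, t) - Xp G (\<omega>, s)) - kap * (t - s)
        = (mu * Xp G (\<omega>, t) - kap * t) - (mu * Xp G (\<omega>, s) - kap * s)"
      using right_diff_distrib[of mu "Xp G (\<omega>, t)" "Xp G (\<omega>, s)"] right_diff_distrib[of kap t s] by linarith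
    have "mu * (Xp G (\<omega>, t) - Xp G (\<omega>, s)) - kap * (t - s) \<le> 2 * Q"
      unfolding e using qb[of t] qb[of s] that by (auto simp: abs_le_iff)
    then have 1: "exp (mu * (Xp G (\<omega>, t) - Xp G (\<omega>, s)) - kap * (t - s)) \<le> exp (2 * Q)" by simp
    have 2: "exp (lam * (t - s)) \<le> exp (lam * D)" using that lam by (auto intro!: mult_left_mono)
    have "hp \<omega> t s \<le> lam * (exp (lam * D) * exp (2 * Q))"
      unfolding hp_def mult.assoc using lam 1 2 by (intro mult_left_mono mult_mono) auto
    then show ?thesis unfolding hp_def K2_def using lam by (auto simp: mult.assoc)
  qed
  have K2: "0 \<le> K2" unfolding K2_def using lam by simp
  have bb: "0 \<le> Bp \<omega> t \<and> Bp \<omega> t \<le> K2 * D" if "0 \<le> t" "t \<le> D" for t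
  proof -
    have eq: "Bp \<omega> t = (\<integral>s. hp \<omega> t s * indicator {0..t} s \<partial>lborel)"
      unfolding Bp_def set_lebesgue_integral_def by (simp add: mult.commute)
    have i1: "integrable lborel (\<lambda>s. hp \<omega> t s * indicator {0..t} s)"
      by (rule borel_integrable_atLeastAtMost) (use hp_cont in \<open>auto simp: continuous_on_eq_continuous_at\<close>)
    have i2: "integrable lborel (\<lambda>s. K2 * indicator {0..t} s)"
      by (rule borel_integrable_atLeastAtMost) auto
    have "(\<integral>s. hp \<omega> t s * indicator {0..t} s \<partial>lborel) \<le> (\<integral>s. K2 * indicator {0..t} s \<partial>lborel)"
      by (rule integral_mono[OF i1 i2]) (use hb that in \<open>auto simp: indicator_def\<close>)
    also have "\<dots> = K2 * t" using that by simp
    also have "\<dots> \<le> K2 * D" using that K2 by (intro mult_left_mono) auto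
    finally have "Bp \<omega> t \<le> K2 * D" unfolding eq .
    moreover have "0 \<le> Bp \<omega> t" unfolding eq
      by (rule Bochner_Integration.integral_nonneg) (use lam in \<open>auto simp: hp_def indicator_def\<close>)
    ultimately show ?thesis by simp
  qed
  have ws: "\<omega> \<in> space M" using w Gsub by auto
  have mU: "Up \<tau> \<omega> \<in> borel_measurable lborel"
    using measurable_Pair2[OF Upm[OF tm] ws] by simp
  have mV: "Vp \<tau> \<omega> \<in> borel_measurable lborel"
    using measurable_Pair2[OF Vpm[OF tm] ws] by simp
  have iK: "integrable lborel (\<lambda>t. K * indicator {0..D} t :: real)" for K :: real
    by (rule borel_integrable_atLeastAtMost) auto
  show "integrable lborel (Up \<tau> \<omega>)"
  proof (rule Bochner_Integration.integrable_bound[OF iK[of "exp Q"] mU], rule AE_I2)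
    fix t
    show "norm (Up \<tau> \<omega> t) \<le> norm (exp Q * indicator {0..D} t)"
    proof (cases "t \<in> Sset \<tau> \<omega>")
      case True
      then have tt: "0 \<le> t" "t < D" using Sset_sub[OF True good_T1[OF g]] unfolding D_def by auto
      have "Up \<tau> \<omega> t = exp (mu * Xp G (\<omega>, t) - kap * t)"
        using True unfolding Up_def Ep_def by (simp add: exp_minus field_simps)
      also have "\<dots> \<le> exp Q" using qb[of t] tt by (simp add: abs_le_iff)
      finally show ?thesis using tt Up_nonneg[of \<tau> \<omega> t] by simp
    next
      case False then show ?thesis unfolding Up_def by simp
    qed
  qed
  show "integrable lborel (Vp \<tau> \<omega>)"
  proof (rule Bochner_Integration.integrable_bound[OF iK[of "K2 * D + lam / c"] mV], rule AE_I2)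
    fix t
    show "norm (Vp \<tau> \<omega> t) \<le> norm ((K2 * D + lam / c) * indicator {0..D} t)"
    proof (cases "t \<in> Sset \<tau> \<omega>")
      case True
      then have tt: "0 \<le> t" "t < D" using Sset_sub[OF True good_T1[OF g]] unfolding D_def by auto
      have e1: "exp (- lam * t) \<le> 1" "0 < exp (- lam * t)" using tt lam by auto
      have b: "\<bar>Bp \<omega> t - lam / c\<bar> \<le> K2 * D + lam / c" using bb[of t] tt divide_pos_pos[OF lam c] by (auto simp: abs_le_iff)
      have "\<bar>Vp \<tau> \<omega> t\<bar> = exp (- lam * t) * \<bar>Bp \<omega> t - lam / c\<bar>"
        using True unfolding Vp_def by (simp add: abs_mult)
      also have "\<dots> \<le> 1 * (K2 * D + lam / c)" using e1 b by (intro mult_mono) auto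
      finally show ?thesis using tt K2 D lam c by simp
    next
      case False then show ?thesis unfolding Vp_def by simp
    qed
  qed
qed

end

context ctxG begin

definition Rp :: "'a \<Rightarrow> real" where "Rp \<omega> = exp (lam * T 1 \<omega>) * (Ep (\<omega>, T 1 \<omega>) * Kf \<omega>)"
definition Sp :: "'a \<Rightarrow> real" where "Sp \<omega> = Kf \<omega> * Bp \<omega> (T 1 \<omega>)"
definition Ai :: "('a \<Rightarrow> ennreal) \<Rightarrow> 'a \<Rightarrow> real" where "Ai \<tau> \<omega> = (\<integral>t. Up \<tau> \<omega> t \<partial>lborel)"
definition Bi :: "('a \<Rightarrow> ennreal) \<Rightarrow> 'a \<Rightarrow> real" where "Bi \<tau> \<omega> = (\<integral>t. Vp \<tau> \<omega> t \<partial>lborel)"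
definition Iv :: "('a \<Rightarrow> ennreal) \<Rightarrow> 'a \<Rightarrow> real" where
  "Iv \<tau> \<omega> = (if ennreal (T 1 \<omega>) \<le> \<tau> \<omega> then exp (- lam * T 1 \<omega>) else 0)"

lemma R_eq: assumes w: "\<omega> \<in> G" shows "exp (lam * T 1 \<omega>) * LP (T 1 \<omega>) \<omega> = Rp \<omega>"
proof -
  have g: "good \<omega>" using w Ggood by auto
  show ?thesis unfolding Rp_def LP_at[OF g] Ep_def
    using Xp_eq[OF w, of "T 1 \<omega>"] good_T1[OF g] by simp
qed

lemma S_eq: assumes w: "\<omega> \<in> G" shows "Ph 0 (T 1 \<omega>) \<omega> = Sp \<omega>"
proof -
  have g: "good \<omega>" using w Ggood by auto
  define D where "D = T 1 \<omega>"
  have D: "0 < D" using good_T1[OF g] unfolding D_def .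
  define F1 where "F1 s = indicator {0..D} s * (lam * exp (lam * (D - s)) * LR s D \<omega>)" for s
  define F2 where "F2 s = Kf \<omega> * (indicator {0..D} s * hp \<omega> D s)" for s
  have eqF: "F1 = (\<lambda>s. F2 s + indicator {D} s * (lam - Kf \<omega> * hp \<omega> D D))"
  proof (rule ext)
    fix s
    show "F1 s = F2 s + indicator {D} s * (lam - Kf \<omega> * hp \<omega> D D)"
    proof (cases "s = D")
      case True then show ?thesis using D unfolding F1_def F2_def by (simp add: LR_diag)
    next
      case False
      show ?thesis
      proof (cases "0 \<le> s \<and> s \<le> D")
        case True
        then have s: "0 \<le> s" "s < D" using False by auto
        have "LR s D \<omega> = exp (mu * (X D \<omega> - X s \<omega>) - kap * (D - s)) * Kf \<omega>"
          using LR_at[OF g, of s] s unfolding D_def by simp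
        then show ?thesis using s False D unfolding F1_def F2_def hp_def
          by (simp add: Xp_eq[OF w] indicator_def)
      next
        case False2: False
        then have "s \<notin> {0..D}" "s \<notin> {D}" using False by auto
        then show ?thesis unfolding F1_def F2_def by simp
      qed
    qed
  qed
  have "Ph 0 D \<omega> = (\<integral>s. F1 s \<partial>lborel)"
    unfolding Phi_def set_lebesgue_integral_def F1_def by simp
  also have "\<dots> = (\<integral>s. F2 s + indicator {D} s * (lam - Kf \<omega> * hp \<omega> D D) \<partial>lborel)"
    by (simp only: eqF)
  also have "\<dots> = (\<integral>s. F2 s \<partial>lborel)"
  proof (rule integral_cong_AE)
    have "hp \<omega> D \<in> borel_measurable borel" by (rule borel_measurable_continuous_onI[OF hp_cont])
    then show "F2 \<in> borel_measurable lborel" unfolding F2_def by measurable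
    then show "(\<lambda>s. F2 s + indicator {D} s * (lam - Kf \<omega> * hp \<omega> D D)) \<in> borel_measurable lborel"
      by measurable
    show "AE s in lborel. F2 s + indicator {D} s * (lam - Kf \<omega> * hp \<omega> D D) = F2 s"
      using AE_lborel_singleton[of D] by eventually_elim simp
  qed
  also have "\<dots> = Kf \<omega> * Bp \<omega> D"
    unfolding F2_def Bp_def set_lebesgue_integral_def by simp
  finally show ?thesis unfolding Sp_def D_def .
qed

lemma RS_nonneg: assumes w: "\<omega> \<in> G" shows "0 \<le> Rp \<omega>" "0 \<le> Sp \<omega>"
proof -
  have "0 \<le> exp (lam * T 1 \<omega>) * LP (T 1 \<omega>) \<omega>" using LP_nonneg[of "T 1 \<omega>" \<omega>] by simp
  then show "0 \<le> Rp \<omega>" using R_eq[OF w] by simp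
  show "0 \<le> Sp \<omega>" using S_eq[OF w] Ph0_nonneg[of "T 1 \<omega>" \<omega>] by simp
qed

lemma Ai_nonneg: "0 \<le> Ai \<tau> \<omega>"
  unfolding Ai_def by (rule Bochner_Integration.integral_nonneg) (rule Up_nonneg)

lemma Iv_nonneg: "0 \<le> Iv \<tau> \<omega>" unfolding Iv_def by simp

lemma Rpm[measurable]: "Rp \<in> borel_measurable M"
proof -
  have "(\<lambda>\<omega>. Ep (\<omega>, T 1 \<omega>)) \<in> borel_measurable M"
    by (rule measurable_compose[OF _ Epm]) measurable
  then show ?thesis unfolding Rp_def by measurable
qed

lemma Spm[measurable]: "Sp \<in> borel_measurable M"
proof -
  have "(\<lambda>\<omega>. (\<lambda>p. Bp (fst p) (snd p)) (\<omega>, T 1 \<omega>)) \<in> borel_measurable M"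
    by (rule measurable_compose[OF _ Bpm]) measurable
  then have "(\<lambda>\<omega>. Bp \<omega> (T 1 \<omega>)) \<in> borel_measurable M" by simp
  then show ?thesis unfolding Sp_def by (rule borel_measurable_times[OF Kfm])
qed

lemma Aim: "\<tau> \<in> borel_measurable M \<Longrightarrow> Ai \<tau> \<in> borel_measurable M"
  unfolding Ai_def using Upm
  by (intro lborel.borel_measurable_lebesgue_integral) (simp add: case_prod_beta')

lemma Bim: "\<tau> \<in> borel_measurable M \<Longrightarrow> Bi \<tau> \<in> borel_measurable M"
  unfolding Bi_def using Vpm
  by (intro lborel.borel_measurable_lebesgue_integral) (simp add: case_prod_beta')

lemma Ivm: "\<tau> \<in> borel_measurable M \<Longrightarrow> Iv \<tau> \<in> borel_measurable M"
  unfolding Iv_def by measurable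

lemma pay_rep: assumes w: "\<omega> \<in> G" and tm: "\<tau> \<in> borel_measurable M"
  shows "pay \<tau> v \<phi> \<omega> = \<phi> * Ai \<tau> \<omega> + Bi \<tau> \<omega> + Iv \<tau> \<omega> * v (\<phi> * Rp \<omega> + Sp \<omega>)"
proof -
  have "(\<integral>t. \<phi> * (indicator (Sset \<tau> \<omega>) t * (exp (- lam * t) * (exp (lam * t) * LP t \<omega>)))
        + indicator (Sset \<tau> \<omega>) t * (exp (- lam * t) * (Ph 0 t \<omega> - lam / c)) \<partial>lborel)
      = (\<integral>t. \<phi> * Up \<tau> \<omega> t + Vp \<tau> \<omega> t \<partial>lborel)"
    using UV_eq[OF w] by simp
  also have "\<dots> = \<phi> * Ai \<tau> \<omega> + Bi \<tau> \<omega>"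
    unfolding Ai_def Bi_def using UV_int[OF w tm] by simp
  finally have 1: "(\<integral>t. \<phi> * (indicator (Sset \<tau> \<omega>) t * (exp (- lam * t) * (exp (lam * t) * LP t \<omega>)))
        + indicator (Sset \<tau> \<omega>) t * (exp (- lam * t) * (Ph 0 t \<omega> - lam / c)) \<partial>lborel)
      = \<phi> * Ai \<tau> \<omega> + Bi \<tau> \<omega>" .
  have 2: "Ph \<phi> (T 1 \<omega>) \<omega> = \<phi> * Rp \<omega> + Sp \<omega>"
    using Ph_affine[of \<phi> "T 1 \<omega>" \<omega>] R_eq[OF w] S_eq[OF w] by simp
  show ?thesis unfolding pay_UV 1 2 Iv_def by simp
qed

end

context ctxG begin

lemma E_props:
  assumes tau: "\<tau> \<in> ST" and wm: "mono_on {0..} w" and wc: "concave_on {0..} w"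
    and wb: "\<And>x. 0 \<le> x \<Longrightarrow> - 1 / c \<le> w x"
  shows "\<And>x y u v. 0 \<le> x \<Longrightarrow> 0 \<le> y \<Longrightarrow> 0 \<le> u \<Longrightarrow> 0 \<le> v \<Longrightarrow> u + v = 1 \<Longrightarrow>
      ereal u * eexp M (pay \<tau> w x) + ereal v * eexp M (pay \<tau> w y) \<le> eexp M (pay \<tau> w (u * x + v * y))"
    and "\<And>x y. 0 \<le> x \<Longrightarrow> x \<le> y \<Longrightarrow> eexp M (pay \<tau> w x) \<le> eexp M (pay \<tau> w y)"
proof -
  have tm[measurable]: "\<tau> \<in> borel_measurable M" using ST_meas tau by auto
  note [measurable] = Aim[OF tm] Bim[OF tm] Ivm[OF tm]
  define w' where "w' x = w (max 0 x)" for x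
  have "mono w'" unfolding w'_def mono_def using wm by (auto intro!: mono_onD[OF wm])
  then have [measurable]: "w' \<in> borel_measurable borel" by (rule borel_measurable_mono)
  define Y where "Y \<phi> \<omega> = \<phi> * Ai \<tau> \<omega> + Bi \<tau> \<omega> + Iv \<tau> \<omega> * w' (\<phi> * Rp \<omega> + Sp \<omega>)" for \<phi> \<omega>
  have Ym: "Y \<phi> \<in> borel_measurable M" for \<phi> unfolding Y_def by measurable
  have rep: "pay \<tau> w \<phi> \<omega> = Y \<phi> \<omega>" if "\<omega> \<in> G" "0 \<le> \<phi>" for \<phi> \<omega>
  proof -
    have "0 \<le> \<phi> * Rp \<omega> + Sp \<omega>" using RS_nonneg[OF that(1)] that(2) by simp
    then show ?thesis unfolding pay_rep[OF that(1) tm] Y_def w'_def by simp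
  qed
  have eq: "AE \<omega> in M. pay \<tau> w \<phi> \<omega> = Y \<phi> \<omega>" if "0 \<le> \<phi>" for \<phi>
    using GAE by eventually_elim (use rep that in auto)
  have lb: "AE \<omega> in M. - (1 / c) \<le> pay \<tau> w \<phi> \<omega>" if "0 \<le> \<phi>" for \<phi>
    using Tpos by eventually_elim (use pay_lower[OF _ that wb] in auto)
  have c0: "0 \<le> 1 / c" using c by simp
  show "ereal u * eexp M (pay \<tau> w x) + ereal v * eexp M (pay \<tau> w y) \<le> eexp M (pay \<tau> w (u * x + v * y))"
    if x: "0 \<le> x" and y: "0 \<le> y" and u: "0 \<le> u" and v: "0 \<le> v" and uv: "u + v = 1" for x y u v
  proof -
    have z: "0 \<le> u * x + v * y" using x y u v by simp
    show ?thesis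
    proof (rule eexp_concave[OF M c0 Ym Ym Ym eq[OF x] eq[OF y] eq[OF z] lb[OF x] lb[OF y] lb[OF z] u v uv])
      show "AE \<omega> in M. u * Y x \<omega> + v * Y y \<omega> \<le> Y (u * x + v * y) \<omega>"
        using GAE
      proof eventually_elim
        case (elim \<omega>)
        define a where "a = x * Rp \<omega> + Sp \<omega>"
        define b where "b = y * Rp \<omega> + Sp \<omega>"
        have a: "0 \<le> a" and b: "0 \<le> b" using RS_nonneg[OF elim] x y unfolding a_def b_def by auto
        have ab: "(u * x + v * y) * Rp \<omega> + Sp \<omega> = u * a + v * b"
        proof -
          have "u * a + v * b = (u * x + v * y) * Rp \<omega> + (u + v) * Sp \<omega>"
            unfolding a_def b_def by (simp add: algebra_simps)
          then show ?thesis using uv by simp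
        qed
        have "u * w a + v * w b \<le> w (u * a + v * b)"
          using wc a b u v uv unfolding concave_on_iff by auto
        moreover have "0 \<le> u * a + v * b" using a b u v by simp
        ultimately have "u * w' a + v * w' b \<le> w' (u * a + v * b)"
          unfolding w'_def using a b by simp
        then have "Iv \<tau> \<omega> * (u * w' a + v * w' b) \<le> Iv \<tau> \<omega> * w' (u * a + v * b)"
          using Iv_nonneg by (rule mult_left_mono)
        moreover have "u * Y x \<omega> + v * Y y \<omega> = (u * x + v * y) * Ai \<tau> \<omega> + (u + v) * Bi \<tau> \<omega> + Iv \<tau> \<omega> * (u * w' a + v * w' b)"
          unfolding Y_def a_def b_def by (simp add: algebra_simps)
        moreover have "Y (u * x + v * y) \<omega> = (u * x + v * y) * Ai \<tau> \<omega> + Bi \<tau> \<omega> + Iv \<tau> \<omega> * w' (u * a + v * b)"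
          unfolding Y_def ab by simp
        ultimately show ?case using uv by simp
      qed
    qed
  qed
  show "eexp M (pay \<tau> w x) \<le> eexp M (pay \<tau> w y)" if x: "0 \<le> x" and xy: "x \<le> y" for x y
  proof (rule eexp_mono_AE)
    have y: "0 \<le> y" using x xy by simp
    show "AE \<omega> in M. pay \<tau> w x \<omega> \<le> pay \<tau> w y \<omega>"
      using GAE
    proof eventually_elim
      case (elim \<omega>)
      have R: "0 \<le> Rp \<omega>" "0 \<le> Sp \<omega>" using RS_nonneg[OF elim] by auto
      have 1: "x * Ai \<tau> \<omega> \<le> y * Ai \<tau> \<omega>" using xy Ai_nonneg by (rule mult_right_mono)
      have 2: "w (x * Rp \<omega> + Sp \<omega>) \<le> w (y * Rp \<omega> + Sp \<omega>)"
        using R x xy by (intro mono_onD[OF wm]) (auto intro: mult_right_mono)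
      have 3: "Iv \<tau> \<omega> * w (x * Rp \<omega> + Sp \<omega>) \<le> Iv \<tau> \<omega> * w (y * Rp \<omega> + Sp \<omega>)"
        using 2 Iv_nonneg by (rule mult_left_mono)
      show ?case unfolding pay_rep[OF elim tm] using 1 3 by simp
    qed
  qed
qed

lemma J_shape:
  assumes wm: "mono_on {0..} w" and wc: "concave_on {0..} w"
    and wb: "\<And>x. 0 \<le> x \<Longrightarrow> - 1 / c \<le> w x"
  shows "concave_on {0..} (\<lambda>x. real_of_ereal (J w x))" and "mono_on {0..} (\<lambda>x. real_of_ereal (J w x))"
proof -
  have fin: "\<bar>J w x\<bar> \<noteq> \<infinity>" if "0 \<le> x" for x
    using J_le0[of w x] J_ge[of w, OF wb that] by auto
  show "concave_on {0..} (\<lambda>x. real_of_ereal (J w x))"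
    unfolding Jop_def
    by (rule INF_concave_ereal) (use E_props(1)[OF _ wm wc wb] fin in \<open>auto simp: Jop_def\<close>)
  show "mono_on {0..} (\<lambda>x. real_of_ereal (J w x))"
    unfolding Jop_def
    by (rule INF_mono_ereal) (use E_props(2)[OF _ wm wc wb] fin in \<open>auto simp: Jop_def\<close>)
qed

end

context ctx begin

lemma J_shape':
  assumes wm: "mono_on {0..} w" and wc: "concave_on {0..} w"
    and wb: "\<And>x. 0 \<le> x \<Longrightarrow> - 1 / c \<le> w x"
  shows "concave_on {0..} (\<lambda>x. real_of_ereal (J w x))" and "mono_on {0..} (\<lambda>x. real_of_ereal (J w x))"
proof -
  obtain G where G: "G \<in> sets M" "G \<subseteq> space M" "\<forall>\<omega>\<in>G. good \<omega>" "AE \<omega> in M. \<omega> \<in> G"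
    using exG by blast
  interpret ctxG M lam mu c lam0 lam1 f X T Z G
    by (unfold_locales) (use G in auto)
  show "concave_on {0..} (\<lambda>x. real_of_ereal (J w x))" "mono_on {0..} (\<lambda>x. real_of_ereal (J w x))"
    using J_shape[OF wm wc wb] by auto
qed

end

lemma interarrival_pos:
  assumes M: "prob_space M" and l: "0 < l" and D: "distributed M lborel Y (exponential_density l)"
  shows "AE x in M. 0 < Y x"
proof -
  have "(AE x in M. 0 < Y x) \<longleftrightarrow> (AE x in lborel. 0 < exponential_density l x \<longrightarrow> 0 < x)"
    using prob_space.distributed_AE2[OF M D, of "\<lambda>x. 0 < x"] by simp
  moreover have "AE x in lborel. 0 < exponential_density l x \<longrightarrow> 0 < x"
    using AE_lborel_singleton[of 0] by eventually_elim (auto simp: exponential_density_def)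
  ultimately show ?thesis by simp
qed

theorem mainTheorem4:
  fixes M :: "'a measure" and nu0 nu1 :: "'e measure"
    and lam lam0 lam1 mu c :: real
    and f :: "'e \<Rightarrow> real"
    and X :: "real \<Rightarrow> 'a \<Rightarrow> real" and T :: "nat \<Rightarrow> 'a \<Rightarrow> real" and Z :: "nat \<Rightarrow> 'a \<Rightarrow> 'e"
  assumes lam: "0 < lam" and lam0: "0 < lam0" and lam1: "0 < lam1"
    and mu: "mu \<noteq> 0" and c: "0 < c"
    and M: "prob_space M"
    and nu0: "prob_space nu0" and nu1: "prob_space nu1"
    and sets_nu1: "sets nu1 = sets nu0"
    and ac: "absolutely_continuous nu0 nu1"
    and f_meas: "f \<in> borel_measurable nu0" and f_nonneg: "\<And>z. 0 \<le> f z"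
    and f_dens: "density nu0 (\<lambda>z. ennreal (f z)) = nu1"
    and X: "wiener_process M X"
    and T: "poisson_arrivals M lam0 T"
    and Z: "iid_marks M nu0 Z"
    and indep_TZ: "indep_rv_pair M
        (Pi\<^sub>M UNIV (\<lambda>_. borel)) (\<lambda>\<omega> n. T (Suc n) \<omega>)
        (Pi\<^sub>M UNIV (\<lambda>_. nu0)) (\<lambda>\<omega> n. Z (Suc n) \<omega>)"
    and indep_X: "indep_rv_pair M
        (Pi\<^sub>M UNIV (\<lambda>_. borel)) (\<lambda>\<omega> t. X t \<omega>)
        (Pi\<^sub>M UNIV (\<lambda>_. borel) \<Otimes>\<^sub>M Pi\<^sub>M UNIV (\<lambda>_. nu0))
        (\<lambda>\<omega>. (\<lambda>n. T (Suc n) \<omega>, \<lambda>n. Z (Suc n) \<omega>))"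
  defines "v \<equiv> (\<lambda>n phi. real_of_ereal (vseq M lam mu c lam0 lam1 f X T Z n phi))"
    and "vinf \<equiv> (\<lambda>phi. lim (\<lambda>n. real_of_ereal (vseq M lam mu c lam0 lam1 f X T Z n phi)))"
  shows "(\<forall>n phi. 0 \<le> phi \<longrightarrow>
            vseq M lam mu c lam0 lam1 f X T Z (Suc n) phi \<le> vseq M lam mu c lam0 lam1 f X T Z n phi)
       \<and> (\<forall>phi. 0 \<le> phi \<longrightarrow> convergent (\<lambda>n. v n phi))
       \<and> (\<forall>n phi. 0 \<le> phi \<longrightarrow>
            - 1 / c \<le> vseq M lam mu c lam0 lam1 f X T Z n phi \<and> vseq M lam mu c lam0 lam1 f X T Z n phi \<le> 0)
       \<and> (\<forall>n. concave_on {0..} (v n) \<and> mono_on {0..} (v n))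
       \<and> concave_on {0..} vinf \<and> mono_on {0..} vinf
       \<and> (\<forall>phi. 0 \<le> phi \<longrightarrow> - 1 / c \<le> vinf phi \<and> vinf phi \<le> 0)"
proof -
  have Xm: "\<And>t. X t \<in> borel_measurable M" and Xc: "AE \<omega> in M. continuous_on {0..} (\<lambda>t. X t \<omega>)"
    using X unfolding wiener_process_def by auto
  have Tm: "\<And>n. T (Suc n) \<in> borel_measurable M"
    and Tind: "\<And>n. distributed M lborel (interarrival T n) (exponential_density lam0)"
    using T unfolding poisson_arrivals_def by auto
  have Tpos: "AE \<omega> in M. 0 < T 1 \<omega>"
    using interarrival_pos[OF M lam0 Tind[of 0]] by (simp add: interarrival_def)
  have Tinc: "AE \<omega> in M. \<forall>n\<ge>1. T n \<omega> < T (Suc n) \<omega>"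
  proof -
    have "AE \<omega> in M. \<forall>n. 1 \<le> n \<longrightarrow> T n \<omega> < T (Suc n) \<omega>"
    proof (subst AE_all_countable, intro allI)
      fix n :: nat
      show "AE \<omega> in M. 1 \<le> n \<longrightarrow> T n \<omega> < T (Suc n) \<omega>"
        using interarrival_pos[OF M lam0 Tind[of n]] by eventually_elim (auto simp: interarrival_def)
    qed
    then show ?thesis by simp
  qed
  have Km: "(\<lambda>\<omega>. f (Z 1 \<omega>)) \<in> borel_measurable M"
  proof -
    have "Z (Suc 0) \<in> measurable M nu0" using Z unfolding iid_marks_def by auto
    then have "(\<lambda>\<omega>. f (Z (Suc 0) \<omega>)) \<in> borel_measurable M" by (rule measurable_compose[OF _ f_meas])
    then show ?thesis by simp
  qed
  interpret ctx M lam mu c lam0 lam1 f X T Z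
    by (rule ctx.intro[of M lam c lam0 lam1 f X T Z, OF M lam c lam0 lam1 f_nonneg Xm Xc Tm Tpos Tinc Km])
  let ?V = "vseq M lam mu c lam0 lam1 f X T Z"
  have VS: "?V (Suc n) \<phi> = J (v n) \<phi>" for n \<phi> unfolding v_def by simp
  have cdiv: "- 1 / ereal c = ereal (- 1 / c)"
  proof -
    have "(1::ereal) / ereal c = ereal (1 / c)" using c by (simp add: one_ereal_def)
    then show ?thesis by simp
  qed
  have P: "mono_on {0..} (v n) \<and> concave_on {0..} (v n) \<and> (\<forall>\<phi>\<ge>0. ereal (- 1 / c) \<le> ?V n \<phi> \<and> ?V n \<phi> \<le> 0)" for n
  proof (induction n)
    case 0
    have "v 0 = (\<lambda>_. 0)" unfolding v_def by (simp add: fun_eq_iff)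
    then show ?case using c by (auto simp: concave_on_const mono_on_def)
  next
    case (Suc n)
    have wb: "- 1 / c \<le> v n x" if "0 \<le> x" for x
    proof -
      have "ereal (- 1 / c) \<le> ?V n x" "?V n x \<le> 0" using Suc that by auto
      then show ?thesis unfolding v_def by (cases "?V n x") auto
    qed
    have vS: "v (Suc n) = (\<lambda>x. real_of_ereal (J (v n) x))" unfolding v_def using VS unfolding v_def by (simp add: fun_eq_iff)
    have "mono_on {0..} (v (Suc n))" "concave_on {0..} (v (Suc n))"
      unfolding vS using J_shape'[of "v n"] Suc wb by auto
    moreover have "ereal (- 1 / c) \<le> ?V (Suc n) \<phi> \<and> ?V (Suc n) \<phi> \<le> 0" if "0 \<le> \<phi>" for \<phi>
      unfolding VS using J_le0[of "v n" \<phi>] J_ge[of "v n", OF wb that] by simp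
    ultimately show ?case by auto
  qed
  have fin: "?V n \<phi> = ereal (v n \<phi>)" if "0 \<le> \<phi>" for n \<phi>
    using P[of n] that unfolding v_def by (cases "?V n \<phi>") auto
  have dec: "?V (Suc n) \<phi> \<le> ?V n \<phi>" if "0 \<le> \<phi>" for n \<phi>
    using that
  proof (induction n arbitrary: \<phi>)
    case 0 then show ?case unfolding VS using J_le0 by simp
  next
    case (Suc n)
    have "v (Suc n) x \<le> v n x" if "0 \<le> x" for x
      using Suc.IH[OF that] fin[OF that, of n] fin[OF that, of "Suc n"] by simp
    then have "J (v (Suc n)) \<phi> \<le> J (v n) \<phi>" using J_mono[of "v (Suc n)" "v n" \<phi>] Suc.prems by blast
    then show ?case unfolding VS .
  qed
  have decr: "v (Suc n) \<phi> \<le> v n \<phi>" if "0 \<le> \<phi>" for n \<phi>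
    using dec[OF that, of n] fin[OF that, of n] fin[OF that, of "Suc n"] by simp
  have lowr: "- 1 / c \<le> v n \<phi>" if "0 \<le> \<phi>" for n \<phi>
  proof -
    have "ereal (- 1 / c) \<le> ?V n \<phi>" using P[of n] that by blast
    then show ?thesis unfolding fin[OF that, of n] by simp
  qed
  have upr: "v n \<phi> \<le> 0" if "0 \<le> \<phi>" for n \<phi>
  proof -
    have "?V n \<phi> \<le> 0" using P[of n] that by blast
    then show ?thesis unfolding fin[OF that, of n] by simp
  qed
  have conv: "convergent (\<lambda>n. v n \<phi>)" if "0 \<le> \<phi>" for \<phi>
  proof -
    have "decseq (\<lambda>n. v n \<phi>)" using decr[OF that] by (rule decseq_SucI)
    moreover have "\<forall>i. - 1 / c \<le> v i \<phi>" using lowr[OF that] by blast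
    ultimately obtain L where "(\<lambda>n. v n \<phi>) \<longlonglongrightarrow> L" by (rule decseq_convergent)
    then show ?thesis by (auto simp: convergent_def)
  qed
  have vinf_eq: "vinf = (\<lambda>\<phi>. lim (\<lambda>n. v n \<phi>))" unfolding vinf_def v_def ..
  have lim: "(\<lambda>n. v n \<phi>) \<longlonglongrightarrow> vinf \<phi>" if "0 \<le> \<phi>" for \<phi>
    unfolding vinf_eq using conv[OF that] by (simp add: convergent_LIMSEQ_iff)
  have cinf: "concave_on {0..} vinf"
    unfolding concave_on_iff
  proof (intro conjI ballI allI impI)
    show "convex {0::real..}" by (rule convex_real_interval)
    fix x y u w :: real assume x: "x \<in> {0..}" and y: "y \<in> {0..}" and u: "0 \<le> u" and w: "0 \<le> w" and uw: "u + w = 1"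
    have z: "0 \<le> u * x + w * y" using x y u w by simp
    have "\<forall>n. u * v n x + w * v n y \<le> v n (u * x + w * y)"
      using P x y u w uw unfolding concave_on_iff by auto
    moreover have "(\<lambda>n. u * v n x + w * v n y) \<longlonglongrightarrow> u * vinf x + w * vinf y"
      using lim x y by (intro tendsto_intros) auto
    ultimately show "u * vinf x + w * vinf y \<le> vinf (u *\<^sub>R x + w *\<^sub>R y)"
      using lim[OF z] by (intro LIMSEQ_le) auto
  qed
  have minf: "mono_on {0..} vinf"
  proof (rule mono_onI)
    fix x y :: real assume x: "x \<in> {0..}" and xy: "x \<le> y"
    have y: "0 \<le> y" using x xy by simp
    have "\<forall>n. v n x \<le> v n y"
    proof
      fix n
      have "mono_on {0..} (v n)" using P[of n] by blast
      then show "v n x \<le> v n y" using x y xy by (auto intro: mono_onD)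
    qed
    then show "vinf x \<le> vinf y" using lim[of x] lim[OF y] x by (intro LIMSEQ_le) auto
  qed
  have binf: "- 1 / c \<le> vinf \<phi> \<and> vinf \<phi> \<le> 0" if "0 \<le> \<phi>" for \<phi>
    using LIMSEQ_le_const[OF lim[OF that], of "- 1 / c"] LIMSEQ_le_const2[OF lim[OF that], of 0]
      lowr[OF that] upr[OF that] by auto
  show ?thesis
    using dec conv P cinf minf binf cdiv by auto
qed

end
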